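(* Let $\mathscr{D}_n$ be the set of derangements of $[n]=\{1,\dots,n\}$. For every integer $m\ge 2$ and every $0\le r\le m-1$, $$\lim_{n\to\infty}\frac{\left|\{\pi\in\mathscr{D}_n:\ \mathrm{maj}(\pi)\equiv r\pmod m\}\right|}{|\mathscr{D}_n|}=\frac1m .$$ That is, the major index over derangements of $[n]$ has the balanced property.
   Context: A derangement of $[n]$ is a permutation $\pi=\pi_1\pi_2\cdots\pi_n$ of $[n]$ with $\pi_i\ne i$ for all $i$. The major index of a permutation $\pi=\pi_1\cdots\pi_n$ is $\mathrm{maj}(\pi)=\sum_{i:\,\pi_i>\pi_{i+1}} i$. A statistic $\xi$ on sets $Q_n$ has the balanced property if for every $m\ge 2$ and every $0\le r\le m-1$, $\lim_{n\to\infty}|\{\pi\in Q_n:\xi(\pi)\equiv r \pmod m\}|/|Q_n| = 1/m$. *)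

theory Defs
  imports Complex_Main "HOL-Combinatorics.Permutations"
begin

text \<open>A permutation pi = pi_1 ... pi_n of [n] = {1..n} is represented by the list
  [pi_1, ..., pi_n]; entry pi_i is the list element at (0-based) position i - 1.\<close>

definition perms_of :: "nat \<Rightarrow> nat list set" where
  "perms_of n = {xs. mset xs = mset [1..<n+1]}"

definition derangements :: "nat \<Rightarrow> nat list set" where
  "derangements n = {xs \<in> perms_of n. \<forall>i<n. xs ! i \<noteq> i + 1}"

definition maj :: "nat list \<Rightarrow> nat" where
  "maj xs = (\<Sum>i\<in>{i. 1 \<le> i \<and> i < length xs \<and> xs ! (i - 1) > xs ! i}. i)"

end

theory Submission
  imports Defs "HOL-Combinatorics.Multiset_Permutations"
begin

lemma rank_lt_count:
  fixes W :: "nat set"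
  assumes "finite W"
  shows "card {j\<in>W. P (card {i\<in>W. i<j})} = card {k. k < card W \<and> P k}"
  using assms
proof (induction "card W" arbitrary: W)
  case 0 then show ?case by simp
next
  case (Suc n)
  define x where "x = Max W"
  have ne: "W \<noteq> {}" using Suc by auto
  have xW: "x \<in> W" using Suc ne by (simp add: x_def)
  define W' where "W' = W - {x}"
  have cW': "card W' = n" using Suc xW by (simp add: W'_def)
  have fW': "finite W'" using Suc by (simp add: W'_def)
  have IH: "card {j\<in>W'. P (card {i\<in>W'. i<j})} = card {k. k < n \<and> P k}"
    using Suc(1)[of W'] cW' fW' by simp
  have hmx: "\<And>j. j \<in> W \<Longrightarrow> j \<le> x" using Suc(3) by (simp add: x_def)
  have lt: "j < x" if "j \<in> W'" for j
  proof -
    have "j \<in> W" "j \<noteq> x" using that by (auto simp: W'_def)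
    then show ?thesis using hmx[of j] by simp
  qed
  have e1: "{i\<in>W. i<j} = {i\<in>W'. i<j}" if "j \<in> W'" for j
    using lt[OF that] unfolding W'_def by auto
  have e2: "{i\<in>W. i<x} = W'"
    using lt hmx by (auto simp: W'_def)
  have A: "{j\<in>W. P (card {i\<in>W. i<j})} = {j\<in>W'. P (card {i\<in>W'. i<j})} \<union> (if P n then {x} else {})"
  proof (rule set_eqI)
    fix j
    show "j \<in> {j\<in>W. P (card {i\<in>W. i<j})} \<longleftrightarrow> j \<in> {j\<in>W'. P (card {i\<in>W'. i<j})} \<union> (if P n then {x} else {})"
    proof (cases "j = x")
      case True
      have "x \<notin> W'" by (simp add: W'_def)
      then show ?thesis using True e2 cW' xW by simp
    next
      case False
      show ?thesis
      proof (cases "j \<in> W")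
        case True
        then have jW': "j \<in> W'" using False by (simp add: W'_def)
        show ?thesis using e1[OF jW'] jW' True False by simp
      next
        case False2: False
        then show ?thesis using False by (auto simp: W'_def)
      qed
    qed
  qed
  have B: "{k. k < Suc n \<and> P k} = {k. k < n \<and> P k} \<union> (if P n then {n} else {})"
    by (auto simp: less_Suc_eq)
  have fin1: "finite {j\<in>W'. P (card {i\<in>W'. i<j})}" using fW' by simp
  have cW: "card W = Suc n" using Suc.hyps(2) by simp
  have xn: "x \<notin> W'" by (simp add: W'_def)
  show ?case
    unfolding A cW B by (cases "P n") (simp_all add: xn IH fin1)
qed

lemma rank_gt_count:
  fixes W :: "nat set"
  assumes "finite W"
  shows "card {j\<in>W. P (card {i\<in>W. j<i})} = card {k. k < card W \<and> P k}"
  using assms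
proof (induction "card W" arbitrary: W)
  case 0 then show ?case by simp
next
  case (Suc n)
  define x where "x = Min W"
  have ne: "W \<noteq> {}" using Suc by auto
  have xW: "x \<in> W" using Suc ne by (simp add: x_def)
  define W' where "W' = W - {x}"
  have cW': "card W' = n" using Suc xW by (simp add: W'_def)
  have fW': "finite W'" using Suc by (simp add: W'_def)
  have IH: "card {j\<in>W'. P (card {i\<in>W'. j<i})} = card {k. k < n \<and> P k}"
    using Suc(1)[of W'] cW' fW' by simp
  have hmx: "\<And>j. j \<in> W \<Longrightarrow> x \<le> j" using Suc(3) by (simp add: x_def)
  have lt: "x < j" if "j \<in> W'" for j
  proof -
    have "j \<in> W" "j \<noteq> x" using that by (auto simp: W'_def)
    then show ?thesis using hmx[of j] by simp
  qed
  have e1: "{i\<in>W. j<i} = {i\<in>W'. j<i}" if "j \<in> W'" for j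
    using lt[OF that] unfolding W'_def by auto
  have e2: "{i\<in>W. x<i} = W'"
    using lt hmx by (auto simp: W'_def)
  have A: "{j\<in>W. P (card {i\<in>W. j<i})} = {j\<in>W'. P (card {i\<in>W'. j<i})} \<union> (if P n then {x} else {})"
  proof (rule set_eqI)
    fix j
    show "j \<in> {j\<in>W. P (card {i\<in>W. j<i})} \<longleftrightarrow> j \<in> {j\<in>W'. P (card {i\<in>W'. j<i})} \<union> (if P n then {x} else {})"
    proof (cases "j = x")
      case True
      have "x \<notin> W'" by (simp add: W'_def)
      then show ?thesis using True e2 cW' xW by simp
    next
      case False
      show ?thesis
      proof (cases "j \<in> W")
        case True
        then have jW': "j \<in> W'" using False by (simp add: W'_def)
        show ?thesis using e1[OF jW'] jW' True False by simp
      next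
        case False2: False
        then show ?thesis using False by (auto simp: W'_def)
      qed
    qed
  qed
  have B: "{k. k < Suc n \<and> P k} = {k. k < n \<and> P k} \<union> (if P n then {n} else {})"
    by (auto simp: less_Suc_eq)
  have fin1: "finite {j\<in>W'. P (card {i\<in>W'. j<i})}" using fW' by simp
  have cW: "card W = Suc n" using Suc.hyps(2) by simp
  have xn: "x \<notin> W'" by (simp add: W'_def)
  show ?case
    unfolding A cW B by (cases "P n") (simp_all add: xn IH fin1)
qed


lemma mod_unique_window:
  fixes a k1 k2 m :: nat
  assumes "(a+k1) mod m = (a+k2) mod m" "k1 < k2 + m" "k2 < k1 + m"
  shows "k1 = k2"
proof (rule ccontr)
  assume ne: "k1 \<noteq> k2"
  { fix x y :: nat assume xy: "x < y" "y < x + m" "(a+x) mod m = (a+y) mod m"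
    have "m dvd ((a+y) - (a+x))" using xy(3) mod_eq_dvd_iff_nat[of "a+x" "a+y" m] xy(1) by simp
    then have "m dvd (y - x)" by simp
    moreover have "0 < y - x" "y - x < m" using xy by auto
    ultimately have False using nat_dvd_not_less by blast }
  then show False using assms ne by (metis linorder_neqE_nat)
qed

definition rcnt :: "nat \<Rightarrow> nat \<Rightarrow> nat \<Rightarrow> nat \<Rightarrow> nat" where
  "rcnt m r a L = card {k. k < L \<and> (a+k) mod m = r}"

lemma rcnt_small: "L \<le> m \<Longrightarrow> rcnt m r a L \<le> 1"
  unfolding rcnt_def
proof -
  assume L: "L \<le> m"
  have fin: "finite {k. k < L \<and> (a+k) mod m = r}" by simp
  have all: "\<forall>x\<in>{k. k < L \<and> (a+k) mod m = r}. \<forall>y\<in>{k. k < L \<and> (a+k) mod m = r}. x = y"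
  proof (intro ballI)
    fix x y assume x: "x \<in> {k. k < L \<and> (a+k) mod m = r}" and y: "y \<in> {k. k < L \<and> (a+k) mod m = r}"
    then have "(a+x) mod m = (a+y) mod m" "x < y + m" "y < x + m" using L by auto
    then show "x = y" by (rule mod_unique_window)
  qed
  have "card {k. k < L \<and> (a+k) mod m = r} \<le> Suc 0"
    using card_le_Suc0_iff_eq[OF fin] all by blast
  then show "card {k. k < L \<and> (a+k) mod m = r} \<le> 1" by simp
qed

lemma rcnt_step:
  assumes m: "0 < m" and r: "r < m"
  shows "rcnt m r a (L + m) = rcnt m r a L + 1"
proof -
  define k0 where "k0 = L + (r + m - (a+L) mod m) mod m"
  have k0a: "L \<le> k0" "k0 < L + m" using m by (auto simp: k0_def)
  have "(a + k0) mod m = ((a+L) + (r + m - (a+L) mod m) mod m) mod m"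
    by (simp add: k0_def add.assoc)
  also have "\<dots> = ((a+L) + (r + m - (a+L) mod m)) mod m"
    by (rule mod_add_right_eq)
  also have "\<dots> = ((a+L) mod m + (r + m - (a+L) mod m)) mod m"
    by (rule mod_add_left_eq[symmetric])
  also have "\<dots> = (r + m) mod m"
  proof -
    have "(a+L) mod m < m" using m by simp
    then have "(a+L) mod m + (r + m - (a+L) mod m) = r + m" by simp
    then show ?thesis by simp
  qed
  also have "\<dots> = r" using r by simp
  finally have k0r: "(a + k0) mod m = r" .
  have W: "{k. L \<le> k \<and> k < L + m \<and> (a+k) mod m = r} = {k0}"
  proof
    show "{k0} \<subseteq> {k. L \<le> k \<and> k < L + m \<and> (a+k) mod m = r}" using k0a k0r by auto
    show "{k. L \<le> k \<and> k < L + m \<and> (a+k) mod m = r} \<subseteq> {k0}"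
    proof
      fix k assume "k \<in> {k. L \<le> k \<and> k < L + m \<and> (a+k) mod m = r}"
      then have "L \<le> k" "k < L + m" "(a+k) mod m = (a+k0) mod m" using k0r by auto
      then have "k = k0" using k0a by (intro mod_unique_window[of a k m k0]) auto
      then show "k \<in> {k0}" by simp
    qed
  qed
  have U: "{k. k < L + m \<and> (a+k) mod m = r} = {k. k < L \<and> (a+k) mod m = r} \<union> {k. L \<le> k \<and> k < L + m \<and> (a+k) mod m = r}"
    by auto
  have "card ({k. k < L \<and> (a+k) mod m = r} \<union> {k. L \<le> k \<and> k < L + m \<and> (a+k) mod m = r})
       = card {k. k < L \<and> (a+k) mod m = r} + card {k. L \<le> k \<and> k < L + m \<and> (a+k) mod m = r}"
    by (rule card_Un_disjoint) auto
  then show ?thesis unfolding rcnt_def U W by simp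
qed

lemma rcnt_bound:
  assumes m: "0 < m" and r: "r < m"
  shows "\<bar>real m * real (rcnt m r a L) - real L\<bar> \<le> real m"
proof (induction L rule: less_induct)
  case (less L)
  show ?case
  proof (cases "L < m")
    case True
    then have "rcnt m r a L \<le> 1" using rcnt_small by simp
    then have "real (rcnt m r a L) \<le> 1" by simp
    then have "real m * real (rcnt m r a L) \<le> real m" using m by simp
    moreover have "real L \<le> real m" using True by simp
    moreover have "0 \<le> real m * real (rcnt m r a L)" by simp
    ultimately show ?thesis unfolding abs_le_iff by linarith
  next
    case False
    then obtain L' where L': "L = L' + m" by (metis add.commute le_Suc_ex not_less)
    have "L' < L" using L' m by simp
    then have IH: "\<bar>real m * real (rcnt m r a L') - real L'\<bar> \<le> real m" using less by simp
    have "rcnt m r a L = rcnt m r a L' + 1" using rcnt_step[OF m r] L' by simp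
    then have "real m * real (rcnt m r a L) - real L = real m * real (rcnt m r a L') - real L'"
      using L' by (simp add: algebra_simps)
    then show ?thesis using IH by simp
  qed
qed

lemma count_rank_gt:
  fixes W :: "nat set"
  assumes "finite W" "0 < m" "r < m" "\<forall>j\<in>W. g j = c + card {i\<in>W. j<i}"
  shows "\<bar>real m * real (card {j\<in>W. g j mod m = r}) - real (card W)\<bar> \<le> real m"
proof -
  have "{j\<in>W. g j mod m = r} = {j\<in>W. (c + card {i\<in>W. j<i}) mod m = r}"
    using assms(4) by auto
  then have "card {j\<in>W. g j mod m = r} = rcnt m r c (card W)"
    unfolding rcnt_def using rank_gt_count[OF assms(1), of "\<lambda>k. (c+k) mod m = r"] by simp
  then show ?thesis using rcnt_bound[OF assms(2,3)] by simp
qed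

lemma count_rank_lt:
  fixes W :: "nat set"
  assumes "finite W" "0 < m" "r < m" "\<forall>j\<in>W. g j = c + card {i\<in>W. i<j}"
  shows "\<bar>real m * real (card {j\<in>W. g j mod m = r}) - real (card W)\<bar> \<le> real m"
proof -
  have "{j\<in>W. g j mod m = r} = {j\<in>W. (c + card {i\<in>W. i<j}) mod m = r}"
    using assms(4) by auto
  then have "card {j\<in>W. g j mod m = r} = rcnt m r c (card W)"
    unfolding rcnt_def using rank_lt_count[OF assms(1), of "\<lambda>k. (c+k) mod m = r"] by simp
  then show ?thesis using rcnt_bound[OF assms(2,3)] by simp
qed

definition Des :: "nat list \<Rightarrow> nat set" where
  "Des xs = {i. 1 \<le> i \<and> i < length xs \<and> xs!(i-1) > xs!i}"

lemma maj_Des: "maj xs = \<Sum>(Des xs)"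
  by (simp add: maj_def Des_def)

lemma Des_sub: "Des xs \<subseteq> {..<length xs}"
  by (auto simp: Des_def)

lemma finite_Des[simp]: "finite (Des xs)"
  using Des_sub finite_subset by blast

definition ins :: "nat \<Rightarrow> nat \<Rightarrow> nat list \<Rightarrow> nat list" where
  "ins v j s = take j s @ v # drop j s"

lemma length_ins[simp]: "j \<le> length s \<Longrightarrow> length (ins v j s) = Suc (length s)"
  by (simp add: ins_def)

lemma nth_ins:
  assumes "j \<le> length s" "k \<le> length s"
  shows "ins v j s ! k = (if k<j then s!k else if k=j then v else s!(k-1))"
  using assms by (auto simp: ins_def nth_append nth_Cons' min_def)

lemma Suc_image_mem: "i \<in> Suc ` A \<longleftrightarrow> 0 < i \<and> i - 1 \<in> A"
  by (cases i) auto

lemma Des_ins: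
  assumes j: "j < length s" and v: "\<forall>x\<in>set s. x < v"
  shows "Des (ins v j s) = {i\<in>Des s. i<j} \<union> {Suc j} \<union> Suc ` {i\<in>Des s. j<i}"
proof (rule set_eqI)
  fix i
  let ?t = "ins v j s"
  let ?L = "length s"
  have lt: "length ?t = Suc ?L" using j by simp
  have sv: "\<And>k. k < ?L \<Longrightarrow> s!k < v" using v by auto
  show "i \<in> Des ?t \<longleftrightarrow> i \<in> {i\<in>Des s. i<j} \<union> {Suc j} \<union> Suc ` {i\<in>Des s. j<i}"
  proof (cases "i < j")
    case True
    then show ?thesis using j by (auto simp: Des_def nth_ins Suc_image_mem)
  next
    case False
    show ?thesis
    proof (cases "i = j")
      case True
      then show ?thesis using j sv[of "j-1"] by (auto simp: Des_def nth_ins Suc_image_mem)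
    next
      case False2: False
      show ?thesis
      proof (cases "i = Suc j")
        case True
        then show ?thesis using j sv[of j] by (auto simp: Des_def nth_ins Suc_image_mem)
      next
        case False3: False
        then have ij: "Suc j < i" using False False2 by simp
        show ?thesis
        proof (cases "i \<le> ?L")
          case True
          have "?t ! (i-1) = s ! (i-1-1)" "?t ! i = s ! (i - 1)"
            using ij True j by (auto simp: nth_ins)
          then show ?thesis using ij True j by (auto simp: Des_def Suc_image_mem)
        next
          case False4: False
          then show ?thesis using ij j by (auto simp: Des_def Suc_image_mem)
        qed
      qed
    qed
  qed
qed

lemma maj_ins:
  assumes j: "j < length s" and v: "\<forall>x\<in>set s. x < v"
  shows "maj (ins v j s) + (if j \<in> Des s then j else 0) = maj s + Suc j + card {i\<in>Des s. j<i}"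
proof -
  let ?D = "Des s"
  have f1: "finite {i\<in>?D. i<j}" "finite {i\<in>?D. j<i}" by auto
  have "maj (ins v j s) = \<Sum>({i\<in>?D. i<j} \<union> {Suc j} \<union> Suc ` {i\<in>?D. j<i})"
    by (simp add: maj_Des Des_ins[OF assms])
  also have "\<dots> = \<Sum>{i\<in>?D. i<j} + Suc j + \<Sum>(Suc ` {i\<in>?D. j<i})"
    by (subst sum.union_disjoint; auto simp: sum.union_disjoint)
  also have "\<Sum>(Suc ` {i\<in>?D. j<i}) = (\<Sum>i\<in>{i\<in>?D. j<i}. Suc i)"
    by (subst sum.reindex) auto
  also have "\<dots> = \<Sum>{i\<in>?D. j<i} + card {i\<in>?D. j<i}"
    unfolding Suc_eq_plus1 sum.distrib by simp
  finally have A: "maj (ins v j s) = \<Sum>{i\<in>?D. i<j} + Suc j + \<Sum>{i\<in>?D. j<i} + card {i\<in>?D. j<i}"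
    by simp
  have Dsplit: "?D = {i\<in>?D. i<j} \<union> (?D \<inter> {j}) \<union> {i\<in>?D. j<i}" by auto
  have "maj s = \<Sum>({i\<in>?D. i<j} \<union> (?D \<inter> {j}) \<union> {i\<in>?D. j<i})"
    using Dsplit maj_Des by metis
  also have "\<dots> = \<Sum>({i\<in>?D. i<j} \<union> (?D \<inter> {j})) + \<Sum>{i\<in>?D. j<i}"
    by (rule sum.union_disjoint) auto
  also have "\<Sum>({i\<in>?D. i<j} \<union> (?D \<inter> {j})) = \<Sum>{i\<in>?D. i<j} + \<Sum>(?D \<inter> {j})"
    by (rule sum.union_disjoint) auto
  also have "\<Sum>(?D \<inter> {j}) = (if j \<in> ?D then j else 0)" by auto
  finally show ?thesis using A by simp
qed

lemma perms_of_alt: "perms_of N = permutations_of_set {1..N}"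
proof -
  have e: "{1..N} = set [1..<N+1]" by auto
  have "mset [1..<N+1] = mset_set {1..N}"
    unfolding e by (rule mset_set_set[symmetric]) simp
  then show ?thesis
    by (simp add: perms_of_def permutations_of_set_altdef permutations_of_multiset_def)
qed

lemma card_perms_of: "card (perms_of N) = fact N"
  by (simp add: perms_of_alt)

lemma finite_perms_of[simp]: "finite (perms_of N)"
  by (simp add: perms_of_alt)

lemma perms_ofD: "xs \<in> perms_of N \<Longrightarrow> set xs = {1..N} \<and> distinct xs \<and> length xs = N"
  unfolding perms_of_alt by (auto dest: permutations_of_setD length_finite_permutations_of_set)

lemma finite_der[simp]: "finite (derangements n)"
  unfolding derangements_def by (rule finite_subset[of _ "perms_of n"]) auto

definition V :: "nat \<Rightarrow> nat list \<Rightarrow> nat set" where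
  "V N s = {j. j < N \<and> ins (Suc N) j s \<in> derangements (Suc N)}"

lemma mset_ins: "j \<le> length s \<Longrightarrow> mset (ins v j s) = mset s + {#v#}"
proof -
  assume "j \<le> length s"
  have "mset (ins v j s) = mset (take j s) + mset (drop j s) + {#v#}"
    by (simp add: ins_def)
  also have "mset (take j s) + mset (drop j s) = mset s"
    by (metis append_take_drop_id mset_append)
  finally show ?thesis .
qed

lemma upt_split_last: "[1..<Suc N + 1] = [1..<N+1] @ [Suc N]"
  by simp

lemma ins_perm: "s \<in> perms_of N \<Longrightarrow> j \<le> N \<Longrightarrow> ins (Suc N) j s \<in> perms_of (Suc N)"
  using perms_ofD[of s N]
  by (simp add: perms_of_def mset_ins)

lemma der_decomp:
  "{xs \<in> derangements (Suc N). P xs}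
   = (\<Union>s\<in>perms_of N. (\<lambda>j. ins (Suc N) j s) ` {j\<in>V N s. P (ins (Suc N) j s)})"
proof
  show "(\<Union>s\<in>perms_of N. (\<lambda>j. ins (Suc N) j s) ` {j\<in>V N s. P (ins (Suc N) j s)})
        \<subseteq> {xs \<in> derangements (Suc N). P xs}"
    by (auto simp: V_def)
next
  show "{xs \<in> derangements (Suc N). P xs}
        \<subseteq> (\<Union>s\<in>perms_of N. (\<lambda>j. ins (Suc N) j s) ` {j\<in>V N s. P (ins (Suc N) j s)})"
  proof
    fix p assume p: "p \<in> {xs \<in> derangements (Suc N). P xs}"
    then have pd: "p \<in> derangements (Suc N)" "P p" by auto
    then have mp: "mset p = mset [1..<Suc N + 1]"
      by (simp add: derangements_def perms_of_def)
    have "Suc N \<in> set_mset (mset [1..<Suc N + 1])" by simp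
    then have "Suc N \<in> set p" using mp by (metis set_mset_mset)
    then obtain xs ys where p_eq: "p = xs @ Suc N # ys" by (meson split_list)
    define s where "s = xs @ ys"
    define j where "j = length xs"
    have pins: "p = ins (Suc N) j s" by (simp add: p_eq ins_def s_def j_def)
    have ms: "mset s = mset [1..<N+1]"
      using mp by (simp add: p_eq s_def)
    then have sp: "s \<in> perms_of N" by (simp add: perms_of_def)
    have ls: "length s = N" using perms_ofD[OF sp] by simp
    have "j \<le> N" using ls by (simp add: j_def s_def)
    moreover have "j \<noteq> N"
    proof
      assume "j = N"
      then have "p ! N = Suc N" by (simp add: p_eq j_def nth_append)
      then show False using pd(1) by (auto simp: derangements_def)
    qed
    ultimately have "j < N" by simp
    then have "j \<in> {j\<in>V N s. P (ins (Suc N) j s)}"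
      using pd pins by (simp add: V_def)
    then show "p \<in> (\<Union>s\<in>perms_of N. (\<lambda>j. ins (Suc N) j s) ` {j\<in>V N s. P (ins (Suc N) j s)})"
      using sp pins by blast
  qed
qed

lemma filter_ins: "v \<notin> set s \<Longrightarrow> filter (\<lambda>x. x \<noteq> v) (ins v j s) = s"
proof -
  assume "v \<notin> set s"
  then have "filter (\<lambda>x. x \<noteq> v) s = s" by (auto simp: filter_id_conv)
  moreover have "filter (\<lambda>x. x \<noteq> v) (ins v j s) = filter (\<lambda>x. x \<noteq> v) (take j s) @ filter (\<lambda>x. x \<noteq> v) (drop j s)"
    by (simp add: ins_def)
  moreover have "filter (\<lambda>x. x \<noteq> v) (take j s) @ filter (\<lambda>x. x \<noteq> v) (drop j s) = filter (\<lambda>x. x \<noteq> v) s"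
    by (metis append_take_drop_id filter_append)
  ultimately show ?thesis by simp
qed

lemma inj_ins: "v \<notin> set s \<Longrightarrow> inj_on (\<lambda>j. ins v j s) {..<Suc (length s)}"
proof (rule inj_onI)
  fix a b assume v: "v \<notin> set s" and a: "a \<in> {..<Suc (length s)}" and b: "b \<in> {..<Suc (length s)}"
    and e: "ins v a s = ins v b s"
  show "a = b"
  proof (rule ccontr)
    assume "a \<noteq> b"
    then have "a < b \<or> b < a" by arith
    then show False
    proof
      assume "a < b"
      then have "ins v b s ! a = s ! a" "ins v a s ! a = v" using a b by (auto simp: nth_ins)
      moreover have "s ! a \<in> set s" using \<open>a<b\<close> b by auto
      ultimately show False using e v by simp
    next
      assume "b < a"
      then have "ins v a s ! b = s ! b" "ins v b s ! b = v" using a b by (auto simp: nth_ins)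
      moreover have "s ! b \<in> set s" using \<open>b<a\<close> a by auto
      ultimately show False using e v by simp
    qed
  qed
qed

lemma card_decomp:
  "card {xs \<in> derangements (Suc N). P xs}
   = (\<Sum>s\<in>perms_of N. card {j\<in>V N s. P (ins (Suc N) j s)})"
proof -
  have "card {xs \<in> derangements (Suc N). P xs}
     = card (\<Union>s\<in>perms_of N. (\<lambda>j. ins (Suc N) j s) ` {j\<in>V N s. P (ins (Suc N) j s)})"
    by (simp add: der_decomp)
  also have "\<dots> = (\<Sum>s\<in>perms_of N. card ((\<lambda>j. ins (Suc N) j s) ` {j\<in>V N s. P (ins (Suc N) j s)}))"
  proof (rule card_UN_disjoint)
    show "finite (perms_of N)" by simp
    show "\<forall>s\<in>perms_of N. finite ((\<lambda>j. ins (Suc N) j s) ` {j\<in>V N s. P (ins (Suc N) j s)})"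
      by (auto simp: V_def)
    show "\<forall>s1\<in>perms_of N. \<forall>s2\<in>perms_of N. s1 \<noteq> s2 \<longrightarrow>
      (\<lambda>j. ins (Suc N) j s1) ` {j\<in>V N s1. P (ins (Suc N) j s1)} \<inter>
      (\<lambda>j. ins (Suc N) j s2) ` {j\<in>V N s2. P (ins (Suc N) j s2)} = {}"
    proof (intro ballI impI)
      fix s1 s2 assume s1: "s1 \<in> perms_of N" and s2: "s2 \<in> perms_of N" and ne: "s1 \<noteq> s2"
      have n1: "Suc N \<notin> set s1" and n2: "Suc N \<notin> set s2"
        using perms_ofD[OF s1] perms_ofD[OF s2] by auto
      show "(\<lambda>j. ins (Suc N) j s1) ` {j\<in>V N s1. P (ins (Suc N) j s1)} \<inter>
      (\<lambda>j. ins (Suc N) j s2) ` {j\<in>V N s2. P (ins (Suc N) j s2)} = {}"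
      proof (rule equals0I)
        fix p assume "p \<in> (\<lambda>j. ins (Suc N) j s1) ` {j\<in>V N s1. P (ins (Suc N) j s1)} \<inter>
          (\<lambda>j. ins (Suc N) j s2) ` {j\<in>V N s2. P (ins (Suc N) j s2)}"
        then obtain j1 j2 where "p = ins (Suc N) j1 s1" "p = ins (Suc N) j2 s2" by blast
        then have "s1 = s2" using filter_ins[OF n1, of j1] filter_ins[OF n2, of j2] by metis
        with ne show False ..
      qed
    qed
  qed
  also have "\<dots> = (\<Sum>s\<in>perms_of N. card {j\<in>V N s. P (ins (Suc N) j s)})"
  proof (rule sum.cong)
    fix s assume s: "s \<in> perms_of N"
    have "inj_on (\<lambda>j. ins (Suc N) j s) {..<Suc (length s)}"
      using perms_ofD[OF s] by (intro inj_ins) auto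
    moreover have "{j\<in>V N s. P (ins (Suc N) j s)} \<subseteq> {..<Suc (length s)}"
      using perms_ofD[OF s] by (auto simp: V_def)
    ultimately show "card ((\<lambda>j. ins (Suc N) j s) ` {j\<in>V N s. P (ins (Suc N) j s)})
                   = card {j\<in>V N s. P (ins (Suc N) j s)}"
      by (meson card_image inj_on_subset)
  qed simp
  finally show ?thesis .
qed


definition cvx :: "nat set \<Rightarrow> bool" where
  "cvx W \<longleftrightarrow> (\<forall>a\<in>W. \<forall>b\<in>W. \<forall>x. a \<le> x \<and> x \<le> b \<longrightarrow> x \<in> W)"

lemma V_cvx:
  assumes ls: "length s = N"
  shows "cvx (V N s)"
  unfolding cvx_def
proof (intro ballI allI impI)
  fix a b x assume a: "a \<in> V N s" and b: "b \<in> V N s" and x: "a \<le> x \<and> x \<le> b"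
  have aN: "a < N" and bN: "b < N" using a b by (auto simp: V_def)
  then have xN: "x < N" using x by simp
  have da: "ins (Suc N) a s \<in> derangements (Suc N)" and db: "ins (Suc N) b s \<in> derangements (Suc N)"
    using a b by (auto simp: V_def)
  have "mset (ins (Suc N) x s) = mset (ins (Suc N) a s)"
    using aN xN ls by (simp add: mset_ins)
  then have px: "ins (Suc N) x s \<in> perms_of (Suc N)"
    using da by (simp add: derangements_def perms_of_def)
  have "\<forall>i<Suc N. ins (Suc N) x s ! i \<noteq> i + 1"
  proof (intro allI impI)
    fix i assume i: "i < Suc N"
    show "ins (Suc N) x s ! i \<noteq> i + 1"
    proof (cases "i < x")
      case True
      then have "ins (Suc N) x s ! i = ins (Suc N) b s ! i"
        using x i xN bN ls by (simp add: nth_ins)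
      then show ?thesis using db i by (simp add: derangements_def)
    next
      case False
      show ?thesis
      proof (cases "i = x")
        case True
        then show ?thesis using xN ls by (simp add: nth_ins)
      next
        case False2: False
        then have "ins (Suc N) x s ! i = ins (Suc N) a s ! i"
          using False x i xN aN ls by (simp add: nth_ins)
        then show ?thesis using da i by (simp add: derangements_def)
      qed
    qed
  qed
  then show "x \<in> V N s" using px xN by (simp add: V_def derangements_def)
qed

lemma gt_split:
  assumes "finite T" "cvx W" "j \<in> W"
  shows "card {i\<in>T. j<i} = card {i\<in>W\<inter>T. j<i} + card {i\<in>T. \<forall>v\<in>W. v<i}"
proof -
  have e: "{i\<in>T. j<i} = {i\<in>W\<inter>T. j<i} \<union> {i\<in>T. \<forall>v\<in>W. v<i}"
  proof
    show "{i\<in>T. j<i} \<subseteq> {i\<in>W\<inter>T. j<i} \<union> {i\<in>T. \<forall>v\<in>W. v<i}"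
    proof
      fix i assume i: "i \<in> {i\<in>T. j<i}"
      show "i \<in> {i\<in>W\<inter>T. j<i} \<union> {i\<in>T. \<forall>v\<in>W. v<i}"
      proof (cases "i \<in> W")
        case True then show ?thesis using i by simp
      next
        case False
        have "\<forall>v\<in>W. v<i"
        proof (intro ballI)
          fix v assume v: "v \<in> W"
          show "v < i"
          proof (rule ccontr)
            assume "\<not> v < i"
            then have "j \<le> i \<and> i \<le> v" using i by simp
            then have "i \<in> W" using assms(2,3) v unfolding cvx_def by blast
            then show False using False by simp
          qed
        qed
        then show ?thesis using i by simp
      qed
    qed
    show "{i\<in>W\<inter>T. j<i} \<union> {i\<in>T. \<forall>v\<in>W. v<i} \<subseteq> {i\<in>T. j<i}"
      using assms(3) by auto
  qed
  have "card ({i\<in>W\<inter>T. j<i} \<union> {i\<in>T. \<forall>v\<in>W. v<i}) = card {i\<in>W\<inter>T. j<i} + card {i\<in>T. \<forall>v\<in>W. v<i}"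
    by (rule card_Un_disjoint) (use assms(1) in auto)
  then show ?thesis using e by simp
qed

lemma lt_split:
  assumes "cvx W" "j \<in> W"
  shows "card {i. i<j \<and> i\<notin>T} = card {i\<in>W-T. i<j} + card {i. i\<notin>T \<and> (\<forall>v\<in>W. i<v)}"
proof -
  have e: "{i. i<j \<and> i\<notin>T} = {i\<in>W-T. i<j} \<union> {i. i\<notin>T \<and> (\<forall>v\<in>W. i<v)}"
  proof
    show "{i. i<j \<and> i\<notin>T} \<subseteq> {i\<in>W-T. i<j} \<union> {i. i\<notin>T \<and> (\<forall>v\<in>W. i<v)}"
    proof
      fix i assume i: "i \<in> {i. i<j \<and> i\<notin>T}"
      show "i \<in> {i\<in>W-T. i<j} \<union> {i. i\<notin>T \<and> (\<forall>v\<in>W. i<v)}"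
      proof (cases "i \<in> W")
        case True then show ?thesis using i by simp
      next
        case False
        have "\<forall>v\<in>W. i<v"
        proof (intro ballI)
          fix v assume v: "v \<in> W"
          show "i < v"
          proof (rule ccontr)
            assume "\<not> i < v"
            then have "v \<le> i \<and> i \<le> j" using i by simp
            then have "i \<in> W" using assms v unfolding cvx_def by blast
            then show False using False by simp
          qed
        qed
        then show ?thesis using i by simp
      qed
    qed
    show "{i\<in>W-T. i<j} \<union> {i. i\<notin>T \<and> (\<forall>v\<in>W. i<v)} \<subseteq> {i. i<j \<and> i\<notin>T}"
      using assms(2) by auto
  qed
  have f2: "finite {i. i\<notin>T \<and> (\<forall>v\<in>W. i<v)}"
    by (rule finite_subset[of _ "{..<j}"]) (use assms(2) in auto)
  have f1: "finite {i\<in>W-T. i<j}"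
    by (rule finite_subset[of _ "{..<j}"]) auto
  have "card ({i\<in>W-T. i<j} \<union> {i. i\<notin>T \<and> (\<forall>v\<in>W. i<v)}) = card {i\<in>W-T. i<j} + card {i. i\<notin>T \<and> (\<forall>v\<in>W. i<v)}"
    by (rule card_Un_disjoint[OF f1 f2]) auto
  then show ?thesis using e by simp
qed

lemma below_split:
  assumes "finite T" "j \<notin> T"
  shows "j + card {i\<in>T. j<i} = card T + card {i. i<j \<and> i\<notin>T}"
proof -
  have "{..<j} = {i. i<j \<and> i\<notin>T} \<union> {i\<in>T. i<j}" by auto
  moreover have "card ({i. i<j \<and> i\<notin>T} \<union> {i\<in>T. i<j}) = card {i. i<j \<and> i\<notin>T} + card {i\<in>T. i<j}"
    by (rule card_Un_disjoint) auto
  ultimately have c1: "j = card {i. i<j \<and> i\<notin>T} + card {i\<in>T. i<j}"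
    by (metis card_lessThan)
  have "T = {i\<in>T. i<j} \<union> {i\<in>T. j<i}"
  proof (rule set_eqI)
    fix x
    show "x \<in> T \<longleftrightarrow> x \<in> {i\<in>T. i<j} \<union> {i\<in>T. j<i}"
      using assms(2) by (cases "x = j") auto
  qed
  moreover have "card ({i\<in>T. i<j} \<union> {i\<in>T. j<i}) = card {i\<in>T. i<j} + card {i\<in>T. j<i}"
    by (rule card_Un_disjoint) (use assms(1) in auto)
  ultimately have c2: "card T = card {i\<in>T. i<j} + card {i\<in>T. j<i}"
    by simp
  show ?thesis using c1 c2 by simp
qed

lemma fiber_bound:
  assumes s: "s \<in> perms_of N" and m: "0 < m" and r: "r < m"
  shows "\<bar>real m * real (card {j\<in>V N s. maj (ins (Suc N) j s) mod m = r}) - real (card (V N s))\<bar> \<le> 2 * real m"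
proof -
  define W where "W = V N s"
  define D where "D = Des s"
  define g where "g j = maj (ins (Suc N) j s)" for j
  have ls: "length s = N" and ss: "\<forall>x\<in>set s. x < Suc N" using perms_ofD[OF s] by auto
  have cv: "cvx W" unfolding W_def using V_cvx[OF ls] .
  have WN: "W \<subseteq> {..<N}" by (auto simp: W_def V_def)
  have fW: "finite W" using WN finite_subset by blast
  have fD: "finite D" by (simp add: D_def)
  have mi: "g j + (if j \<in> D then j else 0) = maj s + Suc j + card {i\<in>D. j<i}" if "j \<in> W" for j
    using maj_ins[of j s "Suc N"] that WN ls ss unfolding g_def D_def by auto
  define c1 where "c1 = maj s + 1 + card {i\<in>D. \<forall>v\<in>W. v<i}"
  define c2 where "c2 = maj s + 1 + card D + card {i. i\<notin>D \<and> (\<forall>v\<in>W. i<v)}"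
  have g1: "\<forall>j\<in>W\<inter>D. g j = c1 + card {i\<in>W\<inter>D. j<i}"
  proof
    fix j assume j: "j \<in> W\<inter>D"
    have "g j = maj s + 1 + card {i\<in>D. j<i}" using mi[of j] j by simp
    then show "g j = c1 + card {i\<in>W\<inter>D. j<i}"
      using gt_split[OF fD cv, of j] j unfolding c1_def by simp
  qed
  have g2: "\<forall>j\<in>W-D. g j = c2 + card {i\<in>W-D. i<j}"
  proof
    fix j assume j: "j \<in> W-D"
    have "g j = maj s + 1 + (j + card {i\<in>D. j<i})" using mi[of j] j by simp
    also have "j + card {i\<in>D. j<i} = card D + card {i. i<j \<and> i\<notin>D}"
      using below_split[OF fD, of j] j by simp
    also have "card {i. i<j \<and> i\<notin>D} = card {i\<in>W-D. i<j} + card {i. i\<notin>D \<and> (\<forall>v\<in>W. i<v)}"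
      using lt_split[OF cv, of j D] j by simp
    finally show "g j = c2 + card {i\<in>W-D. i<j}" unfolding c2_def by simp
  qed
  have b1: "\<bar>real m * real (card {j\<in>W\<inter>D. g j mod m = r}) - real (card (W\<inter>D))\<bar> \<le> real m"
    by (rule count_rank_gt[OF _ m r g1]) (use fW in simp)
  have b2: "\<bar>real m * real (card {j\<in>W-D. g j mod m = r}) - real (card (W-D))\<bar> \<le> real m"
    by (rule count_rank_lt[OF _ m r g2]) (use fW in simp)
  have u1: "card {j\<in>W. g j mod m = r} = card {j\<in>W\<inter>D. g j mod m = r} + card {j\<in>W-D. g j mod m = r}"
  proof -
    have "{j\<in>W. g j mod m = r} = {j\<in>W\<inter>D. g j mod m = r} \<union> {j\<in>W-D. g j mod m = r}" by auto
    moreover have "card ({j\<in>W\<inter>D. g j mod m = r} \<union> {j\<in>W-D. g j mod m = r}) = card {j\<in>W\<inter>D. g j mod m = r} + card {j\<in>W-D. g j mod m = r}"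
      by (rule card_Un_disjoint) (use fW in auto)
    ultimately show ?thesis by simp
  qed
  have u2: "card W = card (W\<inter>D) + card (W-D)"
    using fW by (rule card_Int_Diff)
  have e: "real m * real (card {j\<in>W. g j mod m = r}) - real (card W)
     = (real m * real (card {j\<in>W\<inter>D. g j mod m = r}) - real (card (W\<inter>D)))
       + (real m * real (card {j\<in>W-D. g j mod m = r}) - real (card (W-D)))"
    unfolding u1 u2 by (simp add: algebra_simps)
  have "\<bar>real m * real (card {j\<in>W. g j mod m = r}) - real (card W)\<bar> \<le> 2 * real m"
    unfolding e using b1 b2 abs_triangle_ineq[of "real m * real (card {j\<in>W\<inter>D. g j mod m = r}) - real (card (W\<inter>D))" "real m * real (card {j\<in>W-D. g j mod m = r}) - real (card (W-D))"]
    by linarith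
  then show ?thesis unfolding W_def g_def .
qed

lemma derD: "xs \<in> derangements n \<Longrightarrow> set xs = {1..n} \<and> distinct xs \<and> length xs = n \<and> (\<forall>i<n. xs!i \<noteq> i+1)"
  using perms_ofD by (auto simp: derangements_def)

lemma mset_upt_last: "mset [1..<Suc n + 1] = mset [1..<n+1] + {#Suc n#}"
  by simp

definition f1 :: "nat \<Rightarrow> nat list \<times> nat \<Rightarrow> nat list" where
  "f1 M p = (fst p)[snd p := M+2] @ [fst p ! snd p]"

definition up :: "nat \<Rightarrow> nat \<Rightarrow> nat" where
  "up j x = (if x < j then x else Suc x)"

definition f2 :: "nat \<Rightarrow> nat list \<times> nat \<Rightarrow> nat list" where
  "f2 M p = ins (M+2) (snd p - 1) (map (up (snd p)) (fst p)) @ [snd p]"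

lemma f1_der:
  assumes r: "r \<in> derangements (M+1)" and i: "i < M+1"
  shows "f1 M (r, i) \<in> derangements (M+2)"
proof -
  have rd: "set r = {1..M+1}" "length r = M+1" "\<forall>k<M+1. r!k \<noteq> k+1" using derD[OF r] by auto
  have mr: "mset r = mset [1..<M+1+1]" using r by (simp add: derangements_def perms_of_def)
  have ri: "r ! i \<in># mset r" using i rd(2) by simp
  have "mset (f1 M (r, i)) = add_mset (M+2) (mset r - {#r!i#}) + {#r!i#}"
    using i rd by (simp add: f1_def mset_update)
  also have "\<dots> = mset r + {#M+2#}" using ri by (simp add: insert_DiffM2)
  also have "\<dots> = mset [1..<M+2+1]" using mr by simp
  finally have p: "f1 M (r, i) \<in> perms_of (M+2)" by (simp add: perms_of_def)
  have "\<forall>k<M+2. f1 M (r, i) ! k \<noteq> k+1"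
  proof (intro allI impI)
    fix k assume k: "k < M+2"
    show "f1 M (r, i) ! k \<noteq> k+1"
    proof (cases "k < M+1")
      case True
      then have "f1 M (r, i) ! k = (if k = i then M+2 else r!k)"
        using rd by (simp add: f1_def nth_append)
      then show ?thesis using True rd i by auto
    next
      case False
      then have "k = M+1" using k by simp
      then have "f1 M (r, i) ! k = r ! i" using rd by (simp add: f1_def nth_append)
      moreover have "r ! i \<in> {1..M+1}" using rd i by (metis nth_mem)
      ultimately show ?thesis using \<open>k = M+1\<close> by auto
    qed
  qed
  then show ?thesis using p by (simp add: derangements_def)
qed

lemma f1_last: "length r = M+1 \<Longrightarrow> f1 M (r,i) ! (M+1) = r ! i"
  by (simp add: f1_def nth_append)

lemma f1_inj: "inj_on (f1 M) (derangements (M+1) \<times> {..<M+1})"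
proof (rule inj_onI)
  fix p q assume p: "p \<in> derangements (M+1) \<times> {..<M+1}" and q: "q \<in> derangements (M+1) \<times> {..<M+1}"
    and e: "f1 M p = f1 M q"
  obtain r1 i1 where p': "p = (r1, i1)" by fastforce
  obtain r2 i2 where q': "q = (r2, i2)" by fastforce
  have r1: "set r1 = {1..M+1}" "length r1 = M+1" "i1 < M+1" using p p' derD by auto
  have r2: "set r2 = {1..M+1}" "length r2 = M+1" "i2 < M+1" using q q' derD by auto
  have e1: "r1[i1 := M+2] = r2[i2 := M+2]" and e2: "r1 ! i1 = r2 ! i2"
    using e unfolding p' q' f1_def by auto
  have "r1[i1 := M+2] ! i1 = M+2" using r1 by simp
  then have "r2[i2 := M+2] ! i1 = M+2" using e1 by simp
  moreover have "i1 \<noteq> i2 \<Longrightarrow> r2[i2 := M+2] ! i1 = r2 ! i1" using r1 r2 by simp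
  moreover have "r2 ! i1 \<in> set r2" using r1(2,3) r2(2) by simp
  ultimately have ii: "i1 = i2" using r2 by fastforce
  have "r1 = r1[i1 := M+2, i1 := r1 ! i1]" by simp
  also have "\<dots> = r2[i2 := M+2, i2 := r2 ! i2]" using e1 e2 ii by simp
  also have "\<dots> = r2" by simp
  finally show "p = q" using p' q' ii by simp
qed

lemma up_inj: "inj (up j)"
  by (rule injI) (auto simp: up_def split: if_splits)

lemma map_up_upt:
  assumes "1 \<le> j" "j \<le> M+1"
  shows "map (up j) [1..<M+1] = [1..<j] @ [Suc j..<M+2]"
proof -
  have h1: "[1..<M+1] = [1..<j] @ [j..<M+1]"
    using assms by (metis le_add_diff_inverse upt_add_eq_append)
  have h2: "map (up j) [1..<j] = [1..<j]"
    by (rule map_idI) (auto simp: up_def)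
  have h3: "map (up j) [j..<M+1] = map Suc [j..<M+1]"
    by (rule map_cong) (auto simp: up_def)
  have h4: "Suc (M+1) = M+2" by simp
  show ?thesis unfolding h1 map_append h2 h3 map_Suc_upt h4 by (rule refl)
qed

lemma f2_der:
  assumes r: "r \<in> derangements M" and j: "1 \<le> j" "j \<le> M+1"
  shows "f2 M (r, j) \<in> derangements (M+2)"
proof -
  have rd: "set r = {1..M}" "length r = M" "\<forall>k<M. r!k \<noteq> k+1" using derD[OF r] by auto
  have mr: "mset r = mset [1..<M+1]" using r by (simp add: derangements_def perms_of_def)
  define R where "R = map (up j) r"
  have lR: "length R = M" using rd by (simp add: R_def)
  have "mset R = image_mset (up j) (mset r)" by (simp add: R_def)
  also have "\<dots> = mset (map (up j) [1..<M+1])" using mr by simp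
  also have "\<dots> = mset ([1..<j] @ [Suc j..<M+2])" using map_up_upt[OF j] by simp
  finally have mR: "mset R = mset ([1..<j] @ [Suc j..<M+2])" .
  have "mset (f2 M (r, j)) = mset R + {#M+2#} + {#j#}"
    using j lR by (simp add: f2_def R_def[symmetric] mset_ins)
  also have "\<dots> = mset ([1..<j] @ [j] @ [Suc j..<M+2] @ [M+2])" using mR by simp
  also have "[1..<j] @ [j] @ [Suc j..<M+2] @ [M+2] = [1..<M+2+1]"
  proof -
    have e1: "[1..<Suc j] = [1..<j] @ [j]" using j by simp
    have "[1..<Suc j + (M+2 - Suc j)] = [1..<Suc j] @ [Suc j..<Suc j + (M+2 - Suc j)]"
      by (rule upt_add_eq_append) simp
    moreover have "Suc j + (M+2 - Suc j) = M+2" using j by simp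
    ultimately have e2: "[1..<M+2] = [1..<Suc j] @ [Suc j..<M+2]" by simp
    have e3: "[1..<M+2+1] = [1..<M+2] @ [M+2]" by simp
    show ?thesis unfolding e3 e2 e1 append_assoc by (rule refl)
  qed
  finally have p: "f2 M (r, j) \<in> perms_of (M+2)" by (simp add: perms_of_def)
  have nth: "f2 M (r, j) ! k = (if k < j - 1 then up j (r!k) else if k = j - 1 then M+2 else up j (r!(k-1)))"
    if "k \<le> M" for k
    using that j lR rd by (simp add: f2_def R_def[symmetric] nth_append nth_ins) (simp add: R_def)
  have "\<forall>k<M+2. f2 M (r, j) ! k \<noteq> k+1"
  proof (intro allI impI)
    fix k assume k: "k < M+2"
    show "f2 M (r, j) ! k \<noteq> k+1"
    proof (cases "k \<le> M")
      case False
      then have "k = M+1" using k by simp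
      then have "f2 M (r, j) ! k = j" using lR j by (simp add: f2_def R_def[symmetric] nth_append)
      then show ?thesis using j \<open>k = M+1\<close> by simp
    next
      case True
      show ?thesis
      proof (cases "k < j - 1")
        case True2: True
        have "r!k \<noteq> k+1" using rd True2 j by simp
        then show ?thesis using nth[OF True] True2 by (simp add: up_def) arith
      next
        case False2: False
        show ?thesis
        proof (cases "k = j - 1")
          case True3: True
          then show ?thesis using nth[OF True] j by simp
        next
          case False3: False
          then have kj: "j \<le> k" using False2 j by simp
          have "r!(k-1) \<noteq> k" using rd kj j True
            by (metis One_nat_def Suc_pred add.commute le_less_trans less_le_trans not_less_eq_eq plus_1_eq_Suc
              zero_less_one diff_less le_zero_eq)
          then show ?thesis using nth[OF True] False2 False3 kj by (simp add: up_def)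
        qed
      qed
    qed
  qed
  then show ?thesis using p by (simp add: derangements_def)
qed

lemma f2_last: "length r = M \<Longrightarrow> 1 \<le> j \<Longrightarrow> j \<le> M+1 \<Longrightarrow> f2 M (r,j) ! (M+1) = j"
  by (simp add: f2_def nth_append)

lemma f2_at: "length r = M \<Longrightarrow> 1 \<le> j \<Longrightarrow> j \<le> M+1 \<Longrightarrow> f2 M (r,j) ! (j-1) = M+2"
  by (simp add: f2_def nth_append nth_ins)

lemma f2_inj: "inj_on (f2 M) (derangements M \<times> {1..M+1})"
proof (rule inj_onI)
  fix p q assume p: "p \<in> derangements M \<times> {1..M+1}" and q: "q \<in> derangements M \<times> {1..M+1}"
    and e: "f2 M p = f2 M q"
  obtain r1 j1 where p': "p = (r1, j1)" by fastforce
  obtain r2 j2 where q': "q = (r2, j2)" by fastforce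
  have r1: "set r1 = {1..M}" "length r1 = M" "1 \<le> j1" "j1 \<le> M+1" using p p' derD by auto
  have r2: "set r2 = {1..M}" "length r2 = M" "1 \<le> j2" "j2 \<le> M+1" using q q' derD by auto
  have jj: "j1 = j2" using e f2_last[of r1 M j1] f2_last[of r2 M j2] r1 r2 p' q' by simp
  have "ins (M+2) (j1-1) (map (up j1) r1) = ins (M+2) (j2-1) (map (up j2) r2)"
    using e unfolding p' q' f2_def fst_conv snd_conv append1_eq_conv by blast
  moreover have "M+2 \<notin> set (map (up j1) r1)" using r1 by (auto simp: up_def)
  moreover have "M+2 \<notin> set (map (up j2) r2)" using r2 by (auto simp: up_def)
  ultimately have "map (up j1) r1 = map (up j2) r2" by (metis filter_ins)
  then have "r1 = r2" using jj up_inj by simp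
  then show "p = q" using p' q' jj by simp
qed

lemma f12_disj:
  assumes "p \<in> derangements (M+1) \<times> {..<M+1}" "q \<in> derangements M \<times> {1..M+1}"
  shows "f1 M p \<noteq> f2 M q"
proof
  assume e: "f1 M p = f2 M q"
  obtain r1 i where p': "p = (r1, i)" by fastforce
  obtain r2 j where q': "q = (r2, j)" by fastforce
  have r1: "set r1 = {1..M+1}" "length r1 = M+1" "i < M+1" "\<forall>k<M+1. r1!k \<noteq> k+1"
    using assms(1) p' derD by auto
  have r2: "length r2 = M" "1 \<le> j" "j \<le> M+1" using assms(2) q' derD by auto
  have "r1 ! i = j" using e f1_last[of r1 M i] f2_last[of r2 M j] r1 r2 p' q' by simp
  have a1: "f1 M (r1, i) ! (j-1) = M+2" using e f2_at[of r2 M j] r2 p' q' by simp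
  have jl: "j - 1 < M+1" using r2 by simp
  have a2: "f1 M (r1, i) ! (j-1) = r1[i := M+2] ! (j-1)"
    using jl r1(2) by (simp add: f1_def nth_append)
  have a3: "r1[i := M+2] ! (j-1) = (if i = j-1 then M+2 else r1 ! (j-1))"
    by (rule nth_list_update) (use r1(2,3) in simp)
  have a4: "(if i = j-1 then M+2 else r1 ! (j-1)) = M+2" using a1 unfolding a2 a3 .
  have mem: "r1 ! (j-1) \<in> set r1" using r2 r1(2) by simp
  have "r1 ! (j-1) \<le> M+1" using mem r1(1) by simp
  then have ji: "i = j - 1" using a4 by (cases "i = j-1") simp_all
  have "r1 ! (j-1) \<noteq> (j-1)+1" using r1(4) jl by blast
  moreover have "(j-1)+1 = j" using r2(2) by simp
  ultimately show False using \<open>r1 ! i = j\<close> ji by simp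
qed

lemma der_rec:
  "card (derangements (M+2)) \<ge> (M+1) * (card (derangements (M+1)) + card (derangements M))"
proof -
  let ?A = "derangements (M+1) \<times> {..<M+1}"
  let ?B = "derangements M \<times> {1..M+1}"
  have sub: "f1 M ` ?A \<union> f2 M ` ?B \<subseteq> derangements (M+2)"
    using f1_der f2_der by auto
  have "card (f1 M ` ?A \<union> f2 M ` ?B) = card (f1 M ` ?A) + card (f2 M ` ?B)"
    by (rule card_Un_disjoint) (use f12_disj in auto)
  also have "\<dots> = card ?A + card ?B"
    using card_image[OF f1_inj] card_image[OF f2_inj] by simp
  also have "\<dots> = (M+1) * (card (derangements (M+1)) + card (derangements M))"
    by (simp add: card_cartesian_product algebra_simps)
  finally show ?thesis using card_mono[OF finite_der sub] by simp
qed

lemma der2: "card (derangements 2) \<ge> 1"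
proof -
  have "[2,1] \<in> derangements 2"
    by (auto simp: derangements_def perms_of_def less_Suc_eq numeral_2_eq_2)
  then have "derangements 2 \<noteq> {}" by auto
  then show ?thesis using finite_der by (simp add: Suc_le_eq card_gt_0_iff)
qed

lemma der_lower: "n \<ge> 2 \<Longrightarrow> fact n \<le> 3 * card (derangements n)"
proof (induction n rule: less_induct)
  case (less n)
  show ?case
  proof (cases "n = 2")
    case True then show ?thesis using der2 by (simp add: numeral_2_eq_2)
  next
    case False
    define M where "M = n - 2"
    have M: "n = M + 2" "M \<ge> 1" using less.prems False unfolding M_def by auto
    have rec: "card (derangements n) \<ge> (M+1) * (card (derangements (M+1)) + card (derangements M))"
      using der_rec M by simp
    show ?thesis
    proof (cases "M = 1")
      case True
      then have "card (derangements n) \<ge> 2 * card (derangements 2)" using rec by (simp add: numeral_2_eq_2)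
      then have c2: "card (derangements n) \<ge> 2" using der2 by linarith
      have "n = 3" using True M by simp
      then have "fact n = (6::nat)" by (simp add: fact_numeral)
      then show ?thesis using c2 by linarith
    next
      case False
      then have M2: "M \<ge> 2" using M by simp
      have i1: "fact (M+1) \<le> 3 * card (derangements (M+1))" using less.IH[of "M+1"] M M2 by simp
      have i2: "fact M \<le> 3 * card (derangements M)" using less.IH[of M] M M2 by simp
      have nn: "n = Suc (Suc M)" using M by simp
      have "fact n = (M+1) * (fact (M+1) + fact M)"
        unfolding nn by (simp add: algebra_simps)
      also have "\<dots> \<le> (M+1) * (3 * card (derangements (M+1)) + 3 * card (derangements M))"
        by (rule mult_le_mono2, rule add_mono[OF i1 i2])
      also have "\<dots> = 3 * ((M+1) * (card (derangements (M+1)) + card (derangements M)))"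
        by (simp add: algebra_simps)
      also have "\<dots> \<le> 3 * card (derangements n)" using rec by (rule mult_le_mono2)
      finally show ?thesis .
    qed
  qed
qed

theorem theorem2:
  fixes m r :: nat
  assumes "m \<ge> 2" and "r \<le> m - 1"
  shows "(\<lambda>n. real (card {xs \<in> derangements n. maj xs mod m = r})
                / real (card (derangements n)))
         \<longlonglongrightarrow> 1 / real m"
proof -
  have m0: "0 < m" and rm: "r < m" using assms by auto
  define A where "A n = card {xs \<in> derangements n. maj xs mod m = r}" for n
  define B where "B n = card (derangements n)" for n
  have key: "\<bar>real (A n) / real (B n) - 1 / real m\<bar> \<le> 6 / real n" if n2: "n \<ge> 2" for n
  proof -
    obtain N where N: "n = Suc N" using n2 by (cases n) auto
    have hA: "A n = (\<Sum>s\<in>perms_of N. card {j\<in>V N s. maj (ins (Suc N) j s) mod m = r})"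
      unfolding A_def N by (rule card_decomp)
    have hB: "B n = (\<Sum>s\<in>perms_of N. card (V N s))"
      using card_decomp[of N "\<lambda>_. True"] unfolding B_def N by simp
    have "real m * real (A n) - real (B n)
        = (\<Sum>s\<in>perms_of N. real m * real (card {j\<in>V N s. maj (ins (Suc N) j s) mod m = r}) - real (card (V N s)))"
      unfolding hA hB by (simp add: sum_subtractf sum_distrib_left)
    also have "\<bar>\<dots>\<bar> \<le> (\<Sum>s\<in>perms_of N. \<bar>real m * real (card {j\<in>V N s. maj (ins (Suc N) j s) mod m = r}) - real (card (V N s))\<bar>)"
      by (rule sum_abs)
    also have "\<dots> \<le> (\<Sum>s\<in>perms_of N. 2 * real m)"
      by (rule sum_mono) (rule fiber_bound[OF _ m0 rm])
    also have "\<dots> = 2 * real m * real (fact N)"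
      by (simp add: card_perms_of)
    finally have dif: "\<bar>real m * real (A n) - real (B n)\<bar> \<le> 2 * real m * real (fact N)" .
    have "fact n \<le> 3 * B n" using der_lower[OF n2] unfolding B_def .
    then have "real (fact n) \<le> real (3 * B n)" by (simp only: of_nat_le_iff)
    then have Bl: "real n * real (fact N) \<le> 3 * real (B n)"
      unfolding N by (simp only: fact_Suc of_nat_mult of_nat_numeral of_nat_id)
    have Fpos: "0 < real (fact N)" by simp
    have npos: "0 < real n" using n2 by simp
    have Bpos: "0 < real (B n)" using Bl Fpos npos
      by (smt (verit) mult_pos_pos)
    have M0: "0 < real m" using m0 by simp
    let ?a = "real (A n)" and ?b = "real (B n)" and ?M = "real m" and ?F = "real (fact N)"
    have e1: "?a / ?b - 1 / ?M = (?M * ?a - ?b) / (?M * ?b)"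
      using Bpos M0 by (simp add: field_simps)
    have "\<bar>?a / ?b - 1 / ?M\<bar> = \<bar>?M * ?a - ?b\<bar> / (?M * ?b)"
      unfolding e1 using Bpos M0 by (simp add: abs_divide)
    also have "\<dots> \<le> (2 * ?M * ?F) / (?M * ?b)"
      by (rule divide_right_mono[OF dif]) (use Bpos M0 in simp)
    also have "\<dots> = 2 * ?F / ?b" using M0 by simp
    also have "\<dots> \<le> 6 / real n"
      using Bl Bpos npos by (simp add: divide_simps) (smt (verit) mult.commute)
    finally show ?thesis .
  qed
  have lim: "(\<lambda>n. 1 / real n) \<longlonglongrightarrow> 0"
    by (rule lim_inverse_n')
  have "(\<lambda>n. real (A n) / real (B n) - 1 / real m) \<longlonglongrightarrow> 0"
  proof (rule tendsto_0_le[OF lim, where K = 6])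
    show "\<forall>\<^sub>F n in sequentially. norm (real (A n) / real (B n) - 1 / real m) \<le> norm (1 / real n) * 6"
    proof (rule eventually_sequentiallyI[of 2])
      fix n :: nat assume n: "2 \<le> n"
      have "norm (1 / real n) * 6 = 6 / real n" by simp
      then show "norm (real (A n) / real (B n) - 1 / real m) \<le> norm (1 / real n) * 6"
        using key[OF n] by simp
    qed
  qed
  then have "(\<lambda>n. real (A n) / real (B n)) \<longlonglongrightarrow> 1 / real m"
    by (rule LIM_zero_cancel)
  then show ?thesis unfolding A_def B_def .
qed

end
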